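(* Let $(X_1,\dots,X_M)$ have density $f(x_1,\dots,x_M)=\sum_{\mathbf i\in\mathscr S}p_{\mathbf i}f_{i_1}(x_1)\cdots f_{i_M}(x_M)$ belonging to $\mathrm{MMEam}$. Fix $1\le k\le M$ and $x_{k+1},\dots,x_M\ge0$ (at which the conditional density below is defined). Then the conditional density $$f^{\mathrm{con}}(x_1,\dots,x_k\mid x_{k+1},\dots,x_M)=\frac{f(x_1,\dots,x_M)}{\int_0^\infty\cdots\int_0^\infty f(y_1,\dots,y_k,x_{k+1},\dots,x_M)\,dy_1\cdots dy_k},\quad x_1,\dots,x_k\ge0,$$ is a $k$-variate $\mathrm{MMEam}$ density given by $$f^{\mathrm{con}}(x_1,\dots,x_k\mid x_{k+1},\dots,x_M)=\sum_{\mathbf i\in\mathscr S}q_{\mathbf i}(x_{k+1},\dots,x_M)f_{i_1}(x_1)\cdots f_{i_k}(x_k),$$ where $q_{\mathbf i}(x_{k+1},\dots,x_M)=\dfrac{p_{\mathbf i}f_{i_{k+1}}(x_{k+1})\cdots f_{i_M}(x_M)}{\sum_{\mathbf h\in\mathscr S}p_{\mathbf h}f_{h_{k+1}}(x_{k+1})\cdots f_{h_M}(x_M)}$ if $k<M$ and $q_{\mathbf i}=p_{\mathbf i}$ if $k=M$. Moreover, for $r_1,\dots,r_k\in\mathbb{N}_0$, $$\mathbb{E}\Big[\prod_{j=1}^k X_j^{r_j}\,\Big|\,X_{k+1}=x_{k+1},\dots,X_M=x_M\Big]=\sum_{\mathbf i\in\mathscr S}q_{\mathbf i}(x_{k+1},\dots,x_M)\prod_{j=1}^k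 r_j!\,\alpha_{i_j}(-T_{i_j})^{-(r_j+1)}t_{i_j}.$$
   Context: An ME density is a probability density on $[0,\infty)$ of the form $g(x)=\alpha e^{Tx}t$ ($\alpha$ real row vector, $T$ real square matrix, $t$ real column vector); triples are taken with all eigenvalues of $T$ having strictly negative real part, so $T$ is invertible. MMEam: fix $L,M\in\mathbb N_+$ and ME densities $f_1,\dots,f_L$ with triples $(\alpha_j,T_j,t_j)$. Let $\mathscr S=\{1,\dots,L\}^M$ with elements $\mathbf i=(i_1,\dots,i_M)$, and let $\{p_{\mathbf i}\}$ be real numbers (possibly negative) with $\sum_{\mathbf i}p_{\mathbf i}=1$. The function $f(x_1,\dots,x_M)=\sum_{\mathbf i\in\mathscr S}p_{\mathbf i}f_{i_1}(x_1)\cdots f_{i_M}(x_M)$ on $[0,\infty)^M$ is an MMEam density if $f\ge0$; $\mathrm{MMEam}$ denotes the class of such densities (for any dimension, with mixing weights indexed by $\{1,\dots,L\}^{\text{dimension}}$). *)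

theory Defs
  imports "HOL-Probability.Probability"
          "Jordan_Normal_Form.Char_Poly"
          "Jordan_Normal_Form.Gauss_Jordan_Elimination"
begin

definition mat_exp :: "real mat \<Rightarrow> real mat" where
  "mat_exp A = mat (dim_row A) (dim_col A) (\<lambda>(i,j). \<Sum>n. (A ^\<^sub>m n) $$ (i,j) / fact n)"

definition ME_fun :: "real vec \<Rightarrow> real mat \<Rightarrow> real vec \<Rightarrow> real \<Rightarrow> real" where
  "ME_fun \<alpha> T t x = \<alpha> \<bullet> (mat_exp (x \<cdot>\<^sub>m T) *\<^sub>v t)"

definition ME_triple :: "real vec \<Rightarrow> real mat \<Rightarrow> real vec \<Rightarrow> bool" where
  "ME_triple \<alpha> T t \<longleftrightarrow>
     (\<exists>n. T \<in> carrier_mat n n \<and> dim_vec \<alpha> = n \<and> dim_vec t = n) \<and>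
     (\<forall>c. eigenvalue (map_mat complex_of_real T) c \<longrightarrow> Re c < 0) \<and>
     (\<forall>x\<ge>0. ME_fun \<alpha> T t x \<ge> 0) \<and>
     set_integrable lborel {0..} (ME_fun \<alpha> T t) \<and>
     (LINT x:{0..}|lborel. ME_fun \<alpha> T t x) = 1"

text \<open>Index set S = {1..L}^d; points are functions nat => nat on {1..d} (extensional).\<close>
definition idx :: "nat \<Rightarrow> nat \<Rightarrow> (nat \<Rightarrow> nat) set" where
  "idx L d = PiE {1..d} (\<lambda>_. {1..L})"

definition orthant :: "nat \<Rightarrow> (nat \<Rightarrow> real) set" where
  "orthant d = PiE {1..d} (\<lambda>_. {0..})"

definition mix :: "nat \<Rightarrow> nat \<Rightarrow> (nat \<Rightarrow> real \<Rightarrow> real) \<Rightarrow> ((nat \<Rightarrow> nat) \<Rightarrow> real)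
                    \<Rightarrow> (nat \<Rightarrow> real) \<Rightarrow> real" where
  "mix L d fs p x = (\<Sum>i\<in>idx L d. p i * (\<Prod>m\<in>{1..d}. fs (i m) (x m)))"

definition MMEam_weights :: "nat \<Rightarrow> nat \<Rightarrow> (nat \<Rightarrow> real \<Rightarrow> real) \<Rightarrow> ((nat \<Rightarrow> nat) \<Rightarrow> real) \<Rightarrow> bool" where
  "MMEam_weights L d fs p \<longleftrightarrow> (\<Sum>i\<in>idx L d. p i) = 1 \<and> (\<forall>x\<in>orthant d. mix L d fs p x \<ge> 0)"

definition is_MMEam :: "nat \<Rightarrow> nat \<Rightarrow> (nat \<Rightarrow> real \<Rightarrow> real) \<Rightarrow> ((nat \<Rightarrow> real) \<Rightarrow> real) \<Rightarrow> bool" where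
  "is_MMEam L d fs g \<longleftrightarrow>
     (\<exists>p. MMEam_weights L d fs p \<and> (\<forall>x\<in>orthant d. g x = mix L d fs p x))"

definition glue :: "nat \<Rightarrow> (nat \<Rightarrow> real) \<Rightarrow> (nat \<Rightarrow> real) \<Rightarrow> nat \<Rightarrow> real" where
  "glue k y x = (\<lambda>m. if m \<le> k then y m else x m)"

definition marg :: "nat \<Rightarrow> ((nat \<Rightarrow> real) \<Rightarrow> real) \<Rightarrow> (nat \<Rightarrow> real) \<Rightarrow> real" where
  "marg k f x = (LINT y:orthant k|PiM {1..k} (\<lambda>_. lborel). f (glue k y x))"

definition fcon :: "nat \<Rightarrow> ((nat \<Rightarrow> real) \<Rightarrow> real) \<Rightarrow> (nat \<Rightarrow> real) \<Rightarrow> (nat \<Rightarrow> real) \<Rightarrow> real" where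
  "fcon k f x y = f (glue k y x) / marg k f x"

end

theory Submission
  imports Defs "Jordan_Normal_Form.Spectral_Radius" "HOL-Real_Asymp.Real_Asymp"
begin

lemma pow_smult_mat:
  assumes A: "(A :: 'a :: comm_ring_1 mat) \<in> carrier_mat n n"
  shows "(x \<cdot>\<^sub>m A) ^\<^sub>m k = (x ^ k) \<cdot>\<^sub>m (A ^\<^sub>m k)"
proof (induction k)
  case 0
  then show ?case using A by (auto simp: mat_eq_iff)
next
  case (Suc k)
  have e1: "A ^\<^sub>m k * (x \<cdot>\<^sub>m A) = x \<cdot>\<^sub>m (A ^\<^sub>m k * A)"
    by (rule mult_smult_distrib) (use A in auto)
  have "(x \<cdot>\<^sub>m A) ^\<^sub>m Suc k = (x ^ k \<cdot>\<^sub>m A ^\<^sub>m k) * (x \<cdot>\<^sub>m A)" using Suc by simp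
  also have "\<dots> = x ^ k \<cdot>\<^sub>m (A ^\<^sub>m k * (x \<cdot>\<^sub>m A))"
    by (rule mult_smult_assoc_mat) (use A in auto)
  also have "\<dots> = x ^ k \<cdot>\<^sub>m (x \<cdot>\<^sub>m (A ^\<^sub>m k * A))" using e1 by simp
  also have "\<dots> = (x ^ Suc k) \<cdot>\<^sub>m (A ^\<^sub>m k * A)"
    by (rule eq_matI) auto
  finally show ?case by simp
qed

lemma pow_mat_commute:
  assumes A: "A \<in> carrier_mat n n"
  shows "A * A ^\<^sub>m k = A ^\<^sub>m k * A"
proof (induction k)
  case 0 then show ?case using A by simp
next
  case (Suc k)
  have "A * A ^\<^sub>m Suc k = A * (A ^\<^sub>m k * A)" by simp
  also have "\<dots> = (A * A ^\<^sub>m k) * A" by (rule assoc_mult_mat[symmetric, of _ n n _ n _ n]) (use A in auto)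
  also have "\<dots> = A ^\<^sub>m Suc k * A" using Suc by simp
  finally show ?case .
qed

lemma mult_mat_entry:
  assumes "A \<in> carrier_mat n m" "B \<in> carrier_mat m p" "i < n" "j < p"
  shows "(A * B) $$ (i,j) = (\<Sum>l<m. A $$ (i,l) * B $$ (l,j))"
  using assms by (simp add: scalar_prod_def lessThan_atLeast0 row_def col_def)

lemma pow_mat_bound:
  fixes A :: "real mat"
  assumes A: "A \<in> carrier_mat n n"
  defines "c \<equiv> (\<Sum>i<n. \<Sum>j<n. \<bar>A $$ (i,j)\<bar>)"
  shows "c \<ge> 0" "i < n \<Longrightarrow> j < n \<Longrightarrow> \<bar>(A ^\<^sub>m k) $$ (i,j)\<bar> \<le> c ^ k"
proof -
  show "c \<ge> 0" unfolding c_def by (intro sum_nonneg) auto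
  have colb: "(\<Sum>l<n. \<bar>A $$ (l,j)\<bar>) \<le> c" if "j < n" for j
  proof -
    have "(\<Sum>l<n. \<bar>A $$ (l,j)\<bar>) \<le> (\<Sum>l<n. \<Sum>j'<n. \<bar>A $$ (l,j')\<bar>)"
      by (intro sum_mono member_le_sum) (use that in auto)
    then show ?thesis unfolding c_def .
  qed
  show "i < n \<Longrightarrow> j < n \<Longrightarrow> \<bar>(A ^\<^sub>m k) $$ (i,j)\<bar> \<le> c ^ k"
  proof (induction k arbitrary: i j)
    case 0 then show ?case using A by auto
  next
    case (Suc k)
    have "(A ^\<^sub>m k * A) $$ (i,j) = (\<Sum>l<n. (A ^\<^sub>m k) $$ (i,l) * A $$ (l,j))"
      by (rule mult_mat_entry) (use A Suc.prems in auto)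
    then have "\<bar>(A ^\<^sub>m Suc k) $$ (i,j)\<bar> = \<bar>\<Sum>l<n. (A ^\<^sub>m k) $$ (i,l) * A $$ (l,j)\<bar>"
      by simp
    also have "\<dots> \<le> (\<Sum>l<n. \<bar>(A ^\<^sub>m k) $$ (i,l)\<bar> * \<bar>A $$ (l,j)\<bar>)"
      by (rule order_trans[OF sum_abs]) (simp add: abs_mult)
    also have "\<dots> \<le> (\<Sum>l<n. c ^ k * \<bar>A $$ (l,j)\<bar>)"
      by (intro sum_mono mult_right_mono Suc.IH) (use Suc.prems in auto)
    also have "\<dots> = c ^ k * (\<Sum>l<n. \<bar>A $$ (l,j)\<bar>)" by (simp add: sum_distrib_left)
    also have "\<dots> \<le> c ^ k * c"
      by (intro mult_left_mono colb) (use Suc.prems \<open>c \<ge> 0\<close> in auto)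
    finally show ?case by (simp add: mult.commute)
  qed
qed

definition mcoef :: "real mat \<Rightarrow> nat \<Rightarrow> nat \<Rightarrow> nat \<Rightarrow> real" where
  "mcoef A i j k = (A ^\<^sub>m k) $$ (i,j) / fact k"

lemma mat_exp_dim[simp]: "dim_row (mat_exp B) = dim_row B" "dim_col (mat_exp B) = dim_col B"
  by (simp_all add: mat_exp_def)

lemma mat_exp_carrier[simp]: "A \<in> carrier_mat n n \<Longrightarrow> mat_exp (x \<cdot>\<^sub>m A) \<in> carrier_mat n n"
  by (simp add: mat_exp_def)

lemma mat_exp_entry:
  assumes A: "A \<in> carrier_mat n n" and ij: "i < n" "j < n"
  shows "mat_exp (x \<cdot>\<^sub>m A) $$ (i,j) = (\<Sum>k. mcoef A i j k * x ^ k)"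
  using A ij by (simp add: mat_exp_def pow_smult_mat[OF A] mcoef_def field_simps)

lemma mcoef_summable:
  assumes A: "A \<in> carrier_mat n n" and ij: "i < n" "j < n"
  shows "summable (\<lambda>k. \<bar>mcoef A i j k * x ^ k\<bar>)" "summable (\<lambda>k. mcoef A i j k * x ^ k)"
proof -
  define c where "c = (\<Sum>i<n. \<Sum>j<n. \<bar>A $$ (i,j)\<bar>)"
  have c0: "c \<ge> 0" using pow_mat_bound(1)[OF A] unfolding c_def .
  have b: "\<bar>mcoef A i j k * x ^ k\<bar> \<le> inverse (fact k) * (c * \<bar>x\<bar>) ^ k" for k
  proof -
    have "\<bar>mcoef A i j k * x ^ k\<bar> = \<bar>(A ^\<^sub>m k) $$ (i,j)\<bar> * \<bar>x\<bar> ^ k / fact k"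
      by (simp add: mcoef_def abs_mult power_abs)
    also have "\<dots> \<le> c ^ k * \<bar>x\<bar> ^ k / fact k"
      by (intro divide_right_mono mult_right_mono pow_mat_bound(2)[OF A ij, folded c_def]) auto
    finally show ?thesis by (simp add: power_mult_distrib divide_inverse mult.commute)
  qed
  show s: "summable (\<lambda>k. \<bar>mcoef A i j k * x ^ k\<bar>)"
    by (rule summable_comparison_test[OF _ summable_exp[of "c * \<bar>x\<bar>"]]) (use b in auto)
  show "summable (\<lambda>k. mcoef A i j k * x ^ k)"
    using summable_norm_cancel[of "\<lambda>k. mcoef A i j k * x ^ k"] s by simp
qed

lemma sum_suminf_swap:
  fixes f :: "nat \<Rightarrow> nat \<Rightarrow> real"
  assumes "\<And>l. l < n \<Longrightarrow> summable (f l)"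
  shows "(\<Sum>l<n. (\<Sum>k. f l k)) = (\<Sum>k. \<Sum>l<n. f l k)"
  by (rule suminf_sum[symmetric]) (use assms in auto)

lemma mat_exp_mult_right_entry:
  assumes A: "A \<in> carrier_mat n n" and ij: "i < n" "j < n"
  shows "(mat_exp (x \<cdot>\<^sub>m A) * A) $$ (i,j) = (\<Sum>k. (A ^\<^sub>m k * A) $$ (i,j) / fact k * x ^ k)"
proof -
  have "(mat_exp (x \<cdot>\<^sub>m A) * A) $$ (i,j) = (\<Sum>l<n. mat_exp (x \<cdot>\<^sub>m A) $$ (i,l) * A $$ (l,j))"
    by (rule mult_mat_entry) (use A ij in auto)
  also have "\<dots> = (\<Sum>l<n. (\<Sum>k. mcoef A i l k * x ^ k * A $$ (l,j)))"
  proof (rule sum.cong[OF refl])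
    fix l assume "l \<in> {..<n}"
    then have l: "l < n" by simp
    show "mat_exp (x \<cdot>\<^sub>m A) $$ (i,l) * A $$ (l,j) = (\<Sum>k. mcoef A i l k * x ^ k * A $$ (l,j))"
      using mat_exp_entry[OF A ij(1) l] suminf_mult2[OF mcoef_summable(2)[OF A ij(1) l]] by simp
  qed
  also have "\<dots> = (\<Sum>k. \<Sum>l<n. mcoef A i l k * x ^ k * A $$ (l,j))"
    by (rule sum_suminf_swap, rule summable_mult2, rule mcoef_summable[OF A ij(1)], simp)
  also have "\<dots> = (\<Sum>k. (A ^\<^sub>m k * A) $$ (i,j) / fact k * x ^ k)"
  proof (rule arg_cong[where f=suminf], rule ext)
    fix k
    have "(A ^\<^sub>m k * A) $$ (i,j) = (\<Sum>l<n. (A ^\<^sub>m k) $$ (i,l) * A $$ (l,j))"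
      by (rule mult_mat_entry) (use A ij in auto)
    then show "(\<Sum>l<n. mcoef A i l k * x ^ k * A $$ (l,j)) = (A ^\<^sub>m k * A) $$ (i,j) / fact k * x ^ k"
      unfolding mcoef_def by (simp only: sum_divide_distrib sum_distrib_right) (intro sum.cong, auto)
  qed
  finally show ?thesis .
qed

lemma mat_exp_mult_left_entry:
  assumes A: "A \<in> carrier_mat n n" and ij: "i < n" "j < n"
  shows "(A * mat_exp (x \<cdot>\<^sub>m A)) $$ (i,j) = (\<Sum>k. (A * A ^\<^sub>m k) $$ (i,j) / fact k * x ^ k)"
proof -
  have "(A * mat_exp (x \<cdot>\<^sub>m A)) $$ (i,j) = (\<Sum>l<n. A $$ (i,l) * mat_exp (x \<cdot>\<^sub>m A) $$ (l,j))"
    by (rule mult_mat_entry) (use A ij in auto)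
  also have "\<dots> = (\<Sum>l<n. (\<Sum>k. A $$ (i,l) * (mcoef A l j k * x ^ k)))"
  proof (rule sum.cong[OF refl])
    fix l assume "l \<in> {..<n}"
    then have l: "l < n" by simp
    show "A $$ (i,l) * mat_exp (x \<cdot>\<^sub>m A) $$ (l,j) = (\<Sum>k. A $$ (i,l) * (mcoef A l j k * x ^ k))"
      using mat_exp_entry[OF A l ij(2)] suminf_mult[OF mcoef_summable(2)[OF A l ij(2)]] by simp
  qed
  also have "\<dots> = (\<Sum>k. \<Sum>l<n. A $$ (i,l) * (mcoef A l j k * x ^ k))"
    by (rule sum_suminf_swap, rule summable_mult, rule mcoef_summable[OF A _ ij(2)], simp)
  also have "\<dots> = (\<Sum>k. (A * A ^\<^sub>m k) $$ (i,j) / fact k * x ^ k)"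
  proof (rule arg_cong[where f=suminf], rule ext)
    fix k
    have "(A * A ^\<^sub>m k) $$ (i,j) = (\<Sum>l<n. A $$ (i,l) * (A ^\<^sub>m k) $$ (l,j))"
      by (rule mult_mat_entry) (use A ij in auto)
    then show "(\<Sum>l<n. A $$ (i,l) * (mcoef A l j k * x ^ k)) = (A * A ^\<^sub>m k) $$ (i,j) / fact k * x ^ k"
      by (simp add: mcoef_def sum_distrib_right sum_divide_distrib mult.assoc mult.left_commute)
  qed
  finally show ?thesis .
qed

lemma mat_exp_commute:
  assumes A: "A \<in> carrier_mat n n"
  shows "mat_exp (x \<cdot>\<^sub>m A) * A = A * mat_exp (x \<cdot>\<^sub>m A)"
proof (rule eq_matI)
  fix i j assume "i < dim_row (A * mat_exp (x \<cdot>\<^sub>m A))" "j < dim_col (A * mat_exp (x \<cdot>\<^sub>m A))"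
  then have ij: "i < n" "j < n" using A by auto
  show "(mat_exp (x \<cdot>\<^sub>m A) * A) $$ (i,j) = (A * mat_exp (x \<cdot>\<^sub>m A)) $$ (i,j)"
    unfolding mat_exp_mult_right_entry[OF A ij] mat_exp_mult_left_entry[OF A ij] pow_mat_commute[OF A] ..
qed (use A in auto)

lemma mat_exp_deriv:
  assumes A: "A \<in> carrier_mat n n" and ij: "i < n" "j < n"
  shows "((\<lambda>x. mat_exp (x \<cdot>\<^sub>m A) $$ (i,j)) has_real_derivative (mat_exp (x \<cdot>\<^sub>m A) * A) $$ (i,j)) (at x)"
proof -
  have eq: "(\<lambda>x. mat_exp (x \<cdot>\<^sub>m A) $$ (i,j)) = (\<lambda>x. \<Sum>k. mcoef A i j k * x ^ k)"
    by (rule ext, rule mat_exp_entry[OF A ij])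
  have d: "((\<lambda>x. \<Sum>k. mcoef A i j k * x ^ k) has_real_derivative (\<Sum>k. diffs (mcoef A i j) k * x ^ k)) (at x)"
    by (rule termdiffs_strong_converges_everywhere, rule mcoef_summable[OF A ij])
  have "(\<Sum>k. diffs (mcoef A i j) k * x ^ k) = (\<Sum>k. (A ^\<^sub>m k * A) $$ (i,j) / fact k * x ^ k)"
    by (rule arg_cong[where f=suminf], rule ext) (simp add: diffs_def mcoef_def del: of_nat_Suc)
  also have "\<dots> = (mat_exp (x \<cdot>\<^sub>m A) * A) $$ (i,j)"
    by (rule mat_exp_mult_right_entry[OF A ij, symmetric])
  finally show ?thesis using d eq by simp
qed

lemma mat_exp_zero:
  assumes A: "A \<in> carrier_mat n n"
  shows "mat_exp (0 \<cdot>\<^sub>m A) = 1\<^sub>m n"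
proof (rule eq_matI)
  fix i j assume ij: "i < dim_row (1\<^sub>m n)" "j < dim_col (1\<^sub>m n)"
  then have ij': "i < n" "j < n" by auto
  have "mat_exp (0 \<cdot>\<^sub>m A) $$ (i,j) = (\<Sum>k. mcoef A i j k * 0 ^ k)"
    by (rule mat_exp_entry[OF A ij'])
  also have "\<dots> = mcoef A i j 0" by (rule powser_sums_zero_iff[THEN iffD2, THEN sums_unique, symmetric]) simp
  also have "\<dots> = 1\<^sub>m n $$ (i,j)" using A ij' by (simp add: mcoef_def)
  finally show "mat_exp (0 \<cdot>\<^sub>m A) $$ (i,j) = 1\<^sub>m n $$ (i,j)" .
qed (use A in auto)

lemma mat_prod_deriv:
  fixes M N :: "real \<Rightarrow> real mat"
  assumes MN: "\<And>y. M y \<in> carrier_mat n n" "\<And>y. N y \<in> carrier_mat n n"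
    and M'N': "M' \<in> carrier_mat n n" "N' \<in> carrier_mat n n"
    and dM: "\<And>i j. i < n \<Longrightarrow> j < n \<Longrightarrow> ((\<lambda>y. M y $$ (i,j)) has_real_derivative M' $$ (i,j)) (at x)"
    and dN: "\<And>i j. i < n \<Longrightarrow> j < n \<Longrightarrow> ((\<lambda>y. N y $$ (i,j)) has_real_derivative N' $$ (i,j)) (at x)"
    and ij: "i < n" "j < n"
  shows "((\<lambda>y. (M y * N y) $$ (i,j)) has_real_derivative (M' * N x + M x * N') $$ (i,j)) (at x)"
proof -
  have e: "(\<lambda>y. (M y * N y) $$ (i,j)) = (\<lambda>y. \<Sum>l<n. M y $$ (i,l) * N y $$ (l,j))"
    by (rule ext, rule mult_mat_entry) (use MN ij in auto)
  have dims: "dim_row (M x) = n" "dim_col (M x) = n" "dim_row (N x) = n" "dim_col (N x) = n"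
    "dim_row M' = n" "dim_col M' = n" "dim_row N' = n" "dim_col N' = n"
    using MN(1)[of x] MN(2)[of x] M'N' by auto
  have "(M' * N x + M x * N') $$ (i,j) = (M' * N x) $$ (i,j) + (M x * N') $$ (i,j)"
    using dims ij by simp
  also have "\<dots> = (\<Sum>l<n. M' $$ (i,l) * N x $$ (l,j) + M x $$ (i,l) * N' $$ (l,j))"
    using mult_mat_entry[OF M'N'(1) MN(2) ij] mult_mat_entry[OF MN(1) M'N'(2) ij]
    by (simp add: sum.distrib)
  finally have e2: "(M' * N x + M x * N') $$ (i,j) = (\<Sum>l<n. M' $$ (i,l) * N x $$ (l,j) + M x $$ (i,l) * N' $$ (l,j))" .
  show ?thesis unfolding e e2
  proof (intro DERIV_sum)
    fix l assume "l \<in> {..<n}"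
    then have l: "l < n" by simp
    show "((\<lambda>y. M y $$ (i,l) * N y $$ (l,j)) has_real_derivative M' $$ (i,l) * N x $$ (l,j) + M x $$ (i,l) * N' $$ (l,j)) (at x)"
      using DERIV_mult[OF dM[OF ij(1) l] dN[OF l ij(2)]] by (simp add: mult.commute)
  qed
qed

lemma DERIV_const_mat:
  fixes M :: "real \<Rightarrow> real mat"
  assumes MN: "\<And>y. M y \<in> carrier_mat n n"
    and d: "\<And>x i j. i < n \<Longrightarrow> j < n \<Longrightarrow> ((\<lambda>y. M y $$ (i,j)) has_real_derivative 0) (at x)"
  shows "M x = M y"
proof (rule eq_matI)
  fix i j assume "i < dim_row (M y)" "j < dim_col (M y)"
  then have "i < n" "j < n" using MN[of y] by auto
  then show "M x $$ (i,j) = M y $$ (i,j)"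
    using DERIV_isconst_all[of "\<lambda>y. M y $$ (i,j)" x y] d by blast
qed (use MN[of x] MN[of y] in auto)

lemma mat_exp_neg_deriv:
  assumes A: "A \<in> carrier_mat n n" and ij: "i < n" "j < n"
  shows "((\<lambda>x. mat_exp ((- x) \<cdot>\<^sub>m A) $$ (i,j)) has_real_derivative (- (mat_exp ((- x) \<cdot>\<^sub>m A) * A)) $$ (i,j)) (at x)"
proof -
  have "((\<lambda>x. mat_exp ((- x) \<cdot>\<^sub>m A) $$ (i,j)) has_real_derivative (mat_exp ((- x) \<cdot>\<^sub>m A) * A) $$ (i,j) * (- 1)) (at x)"
    by (rule DERIV_chain2[of "\<lambda>x. mat_exp (x \<cdot>\<^sub>m A) $$ (i,j)"], rule mat_exp_deriv[OF A ij])
       (auto intro!: derivative_eq_intros)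
  then show ?thesis using A ij by simp
qed

lemma mat_exp_inverse:
  assumes A: "A \<in> carrier_mat n n"
  shows "mat_exp (x \<cdot>\<^sub>m A) * mat_exp ((- x) \<cdot>\<^sub>m A) = 1\<^sub>m n"
proof -
  let ?E = "\<lambda>x. mat_exp (x \<cdot>\<^sub>m A)"
  let ?P = "\<lambda>x. ?E x * ?E (- x)"
  have c: "?P x = ?P 0"
  proof (rule DERIV_const_mat[of _ n])
    fix y show "?P y \<in> carrier_mat n n" using A by (auto intro!: mult_carrier_mat)
  next
    fix y i j assume ij: "i < n" "j < n"
    have "((\<lambda>x. ?P x $$ (i,j)) has_real_derivative ((?E y * A) * ?E (-y) + ?E y * (- (?E (-y) * A))) $$ (i,j)) (at y)"
      by (rule mat_prod_deriv[of _ n, OF _ _ _ _ mat_exp_deriv[OF A] mat_exp_neg_deriv[OF A] ij])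
         (use A in auto)
    moreover have "(?E y * A) * ?E (-y) + ?E y * (- (?E (-y) * A)) = 0\<^sub>m n n"
    proof -
      have "?E (-y) * A = A * ?E (-y)" by (rule mat_exp_commute[OF A])
      then have "?E y * (- (?E (-y) * A)) = - (?E y * (A * ?E (-y)))"
        using A by (simp add: uminus_mult_right_mat)
      also have "?E y * (A * ?E (-y)) = (?E y * A) * ?E (-y)"
        by (rule assoc_mult_mat[symmetric, of _ n n _ n _ n]) (use A in auto)
      finally have "?E y * (- (?E (-y) * A)) = - ((?E y * A) * ?E (-y))" .
      then show ?thesis by (rule ssubst) (rule eq_matI, use A in auto)
    qed
    ultimately have "((\<lambda>x. ?P x $$ (i,j)) has_real_derivative (0\<^sub>m n n) $$ (i,j)) (at y)" by (simp only:)
    then show "((\<lambda>x. ?P x $$ (i,j)) has_real_derivative 0) (at y)" using ij by (simp only: index_zero_mat(1))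
  qed
  then show ?thesis using mat_exp_zero[OF A] A by simp
qed

lemma shift_deriv:
  assumes T: "T \<in> carrier_mat n n" and h: "h > 0" and ij: "i < n" "j < n"
  defines "B \<equiv> 1\<^sub>m n + h \<cdot>\<^sub>m T"
  shows "((\<lambda>y. (exp (- y / h) \<cdot>\<^sub>m mat_exp ((y / h) \<cdot>\<^sub>m B)) $$ (i,j)) has_real_derivative
          ((exp (- x / h) \<cdot>\<^sub>m mat_exp ((x / h) \<cdot>\<^sub>m B)) * T) $$ (i,j)) (at x)"
proof -
  have B: "B \<in> carrier_mat n n" using T unfolding B_def by auto
  let ?X = "mat_exp ((x / h) \<cdot>\<^sub>m B)"
  have X: "?X \<in> carrier_mat n n" using B by simp
  have d1: "((\<lambda>y. mat_exp ((y / h) \<cdot>\<^sub>m B) $$ (i,j)) has_real_derivative (?X * B) $$ (i,j) * (1 / h)) (at x)"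
    by (rule DERIV_chain2[of "\<lambda>s. mat_exp (s \<cdot>\<^sub>m B) $$ (i,j)", OF mat_exp_deriv[OF B ij]])
       (use h in \<open>auto intro!: derivative_eq_intros\<close>)
  have d2: "((\<lambda>y. exp (- y / h)) has_real_derivative exp (- x / h) * (- 1 / h)) (at x)"
    by (use h in \<open>auto intro!: derivative_eq_intros\<close>)
  have XB: "?X * B = ?X + h \<cdot>\<^sub>m (?X * T)"
  proof -
    have "?X * B = ?X * 1\<^sub>m n + ?X * (h \<cdot>\<^sub>m T)"
      unfolding B_def by (rule mult_add_distrib_mat[of _ n n]) (use X T in auto)
    also have "?X * (h \<cdot>\<^sub>m T) = h \<cdot>\<^sub>m (?X * T)" by (rule mult_smult_distrib) (use X T in auto)
    also have "?X * 1\<^sub>m n = ?X" by (rule right_mult_one_mat[OF X])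
    finally show ?thesis .
  qed
  have e: "(\<lambda>y. (exp (- y / h) \<cdot>\<^sub>m mat_exp ((y / h) \<cdot>\<^sub>m B)) $$ (i,j)) =
           (\<lambda>y. exp (- y / h) * mat_exp ((y / h) \<cdot>\<^sub>m B) $$ (i,j))"
    using B ij by auto
  have "((\<lambda>y. exp (- y / h) * mat_exp ((y / h) \<cdot>\<^sub>m B) $$ (i,j)) has_real_derivative
        exp (- x / h) * (- 1 / h) * ?X $$ (i,j) + (?X * B) $$ (i,j) * (1 / h) * exp (- x / h)) (at x)"
    by (rule DERIV_mult[OF d2 d1])
  moreover have "exp (- x / h) * (- 1 / h) * ?X $$ (i,j) + (?X * B) $$ (i,j) * (1 / h) * exp (- x / h)
     = ((exp (- x / h) \<cdot>\<^sub>m ?X) * T) $$ (i,j)"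
  proof -
    have "(?X * B) $$ (i,j) = ?X $$ (i,j) + h * (?X * T) $$ (i,j)"
      unfolding XB using carrier_matD[OF X] carrier_matD[OF T] ij by simp
    moreover have "((exp (- x / h) \<cdot>\<^sub>m ?X) * T) $$ (i,j) = exp (- x / h) * (?X * T) $$ (i,j)"
      using mult_smult_assoc_mat[OF X T, of "exp (- x / h)"] carrier_matD[OF X] carrier_matD[OF T] ij by simp
    ultimately show ?thesis using h by (simp add: field_simps)
  qed
  ultimately show ?thesis unfolding e by simp
qed

lemma mat_exp_shift:
  assumes T: "T \<in> carrier_mat n n" and h: "h > 0"
  defines "B \<equiv> 1\<^sub>m n + h \<cdot>\<^sub>m T"
  shows "mat_exp (x \<cdot>\<^sub>m T) = exp (- x / h) \<cdot>\<^sub>m mat_exp ((x / h) \<cdot>\<^sub>m B)"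
proof -
  have B: "B \<in> carrier_mat n n" using T unfolding B_def by auto
  let ?E = "\<lambda>x. mat_exp (x \<cdot>\<^sub>m T)"
  let ?R = "\<lambda>y. exp (- y / h) \<cdot>\<^sub>m mat_exp ((y / h) \<cdot>\<^sub>m B)"
  have R: "?R y \<in> carrier_mat n n" for y using B by simp
  let ?P = "\<lambda>x. ?R x * ?E (- x)"
  have c: "?P x = ?P 0"
  proof (rule DERIV_const_mat[of _ n])
    fix y show "?P y \<in> carrier_mat n n" using T R[of y] by (auto intro!: mult_carrier_mat)
  next
    fix y i j assume ij: "i < n" "j < n"
    have "((\<lambda>x. ?P x $$ (i,j)) has_real_derivative ((?R y * T) * ?E (-y) + ?R y * (- (?E (-y) * T))) $$ (i,j)) (at y)"
      by (rule mat_prod_deriv[of _ n, OF _ _ _ _ shift_deriv[OF T h, folded B_def] mat_exp_neg_deriv[OF T] ij])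
         (use T R in \<open>auto intro!: mult_carrier_mat\<close>)
    moreover have "(?R y * T) * ?E (-y) + ?R y * (- (?E (-y) * T)) = 0\<^sub>m n n"
    proof -
      have "?E (-y) * T = T * ?E (-y)" by (rule mat_exp_commute[OF T])
      moreover have "?R y * (- (T * ?E (-y))) = - (?R y * (T * ?E (-y)))"
        by (rule uminus_mult_right_mat) (use T R[of y] in auto)
      ultimately have "?R y * (- (?E (-y) * T)) = - (?R y * (T * ?E (-y)))" by (simp only:)
      also have "?R y * (T * ?E (-y)) = (?R y * T) * ?E (-y)"
        by (rule assoc_mult_mat[symmetric, of _ n n _ n _ n]) (use T R in auto)
      finally have "?R y * (- (?E (-y) * T)) = - ((?R y * T) * ?E (-y))" .
      then show ?thesis by (rule ssubst) (rule eq_matI, use T R[of y] in auto)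
    qed
    ultimately have "((\<lambda>x. ?P x $$ (i,j)) has_real_derivative (0\<^sub>m n n) $$ (i,j)) (at y)" by (simp only:)
    then show "((\<lambda>x. ?P x $$ (i,j)) has_real_derivative 0) (at y)" using ij by (simp only: index_zero_mat(1))
  qed
  have P0: "?P 0 = 1\<^sub>m n"
  proof -
    have "?R 0 = 1\<^sub>m n" using mat_exp_zero[OF B] by (auto intro!: eq_matI)
    moreover have "?E (- 0) = 1\<^sub>m n" using mat_exp_zero[OF T] by simp
    ultimately show ?thesis by simp
  qed
  have inv: "?E (- x) * ?E x = 1\<^sub>m n" using mat_exp_inverse[OF T, of "- x"] by simp
  have "?R x = ?R x * (?E (- x) * ?E x)" using inv right_mult_one_mat[OF R[of x]] by simp
  also have "\<dots> = (?R x * ?E (- x)) * ?E x"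
    by (rule assoc_mult_mat[symmetric, of _ n n _ n _ n]) (use T R in auto)
  also have "\<dots> = 1\<^sub>m n * ?E x" using c P0 by (simp only:)
  also have "\<dots> = ?E x" using T by simp
  finally show ?thesis by simp
qed

lemma mult_mat_vec_entry:
  assumes "A \<in> carrier_mat n m" "v \<in> carrier_vec m" "i < n"
  shows "vec_index (A *\<^sub>v v) i = (\<Sum>k<m. A $$ (i,k) * vec_index v k)"
  using assms by (simp add: scalar_prod_def lessThan_atLeast0 row_def)

lemma choose_h_rho:
  fixes S :: "complex set"
  assumes fin: "finite S" and neg: "\<And>l. l \<in> S \<Longrightarrow> Re l < 0"
  shows "\<exists>h \<rho>. h > 0 \<and> 0 < \<rho> \<and> \<rho> < 1 \<and> (\<forall>l\<in>S. cmod (1 + complex_of_real h * l) < \<rho>)"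
proof -
  define m where "m = Max (insert (-1) (Re ` S))"
  define b where "b = Max (insert 1 (cmod ` S))"
  have m_neg: "m < 0" unfolding m_def using fin neg by (auto simp: Max_less_iff)
  have m_ge: "Re l \<le> m" if "l \<in> S" for l unfolding m_def using fin that by (intro Max_ge) auto
  have m_low: "-1 \<le> m" unfolding m_def using fin by (intro Max_ge) auto
  have b_ge: "cmod l \<le> b" if "l \<in> S" for l unfolding b_def using fin that by (intro Max_ge) auto
  have b1: "1 \<le> b" unfolding b_def using fin by (intro Max_ge) auto
  define h where "h = - m / b^2"
  have h: "h > 0" unfolding h_def using m_neg b1 by (simp add: divide_neg_pos)
  have hb: "h * b^2 = - m" unfolding h_def using b1 by simp
  define \<rho> where "\<rho> = sqrt (1 + h * m / 2)"
  have mm: "m * m \<le> b^2"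
  proof -
    have "(-m) * (-m) \<le> 1 * 1" by (rule mult_mono) (use m_low m_neg in auto)
    moreover have "1 \<le> b^2" using b1 by (simp add: one_le_power)
    ultimately show ?thesis by simp
  qed
  have hm: "h * m \<ge> -1"
  proof -
    have "h * m = - (m * m) / b^2" unfolding h_def by (simp add: power2_eq_square)
    moreover have "(m * m) / b^2 \<le> 1" using mm b1 by (simp add: divide_le_eq_1)
    ultimately show ?thesis by linarith
  qed
  have hm0: "h * m < 0" using h m_neg by (simp add: mult_pos_neg)
  have rho_pos: "0 < \<rho>" unfolding \<rho>_def using hm by (intro real_sqrt_gt_zero) linarith
  have rho_lt: "\<rho> < 1" unfolding \<rho>_def using hm0 by simp
  have key: "cmod (1 + complex_of_real h * l) < \<rho>" if l: "l \<in> S" for l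
  proof -
    have c2: "(cmod (1 + complex_of_real h * l))^2 = 1 + 2 * h * Re l + h^2 * (cmod l)^2"
    proof -
      have a: "(cmod (1 + complex_of_real h * l))^2 = (1 + h * Re l)^2 + (h * Im l)^2"
        by (simp add: cmod_power2)
      have b: "(cmod l)^2 = (Re l)^2 + (Im l)^2" by (simp add: cmod_power2)
      show ?thesis unfolding a b by (simp add: power2_eq_square algebra_simps)
    qed
    have "h^2 * (cmod l)^2 \<le> h^2 * b^2"
      using b_ge[OF l] by (intro mult_left_mono power_mono) auto
    also have "\<dots> = - h * m" using hb by (simp add: power2_eq_square algebra_simps)
    finally have "(cmod (1 + complex_of_real h * l))^2 \<le> 1 + 2 * h * Re l - h * m"
      using c2 by linarith
    also have "\<dots> \<le> 1 + h * m"
    proof -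
      have "h * Re l \<le> h * m" using m_ge[OF l] h by (intro mult_left_mono) auto
      then show ?thesis by linarith
    qed
    also have "\<dots> < 1 + h * m / 2" using hm0 by linarith
    finally have "(cmod (1 + complex_of_real h * l))^2 < 1 + h * m / 2" .
    then show ?thesis unfolding \<rho>_def by (intro real_less_rsqrt)
  qed
  show ?thesis using h rho_pos rho_lt key by blast
qed

lemma spectral_shift:
  fixes T :: "real mat"
  assumes T: "T \<in> carrier_mat n n"
    and ev: "\<And>c. eigenvalue (map_mat complex_of_real T) c \<Longrightarrow> Re c < 0"
  shows "\<exists>h \<rho> c. h > 0 \<and> 0 < \<rho> \<and> \<rho> < 1 \<and>
           (\<forall>k i j. i < n \<longrightarrow> j < n \<longrightarrow> \<bar>((1\<^sub>m n + h \<cdot>\<^sub>m T) ^\<^sub>m k) $$ (i,j)\<bar> \<le> c * \<rho> ^ k)"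
proof -
  define Tc where "Tc = map_mat complex_of_real T"
  have Tc: "Tc \<in> carrier_mat n n" using T unfolding Tc_def by auto
  have fin: "finite (spectrum Tc)" by (rule card_finite_spectrum(1)[OF Tc])
  obtain h \<rho> where h: "h > 0" and rho: "0 < \<rho>" "\<rho> < 1"
    and key: "\<And>l. l \<in> spectrum Tc \<Longrightarrow> cmod (1 + complex_of_real h * l) < \<rho>"
    using choose_h_rho[OF fin] ev unfolding spectrum_def Tc_def by force
  define B where "B = 1\<^sub>m n + h \<cdot>\<^sub>m T"
  have B: "B \<in> carrier_mat n n" using T unfolding B_def by auto
  show ?thesis
  proof (cases "n = 0")
    case True
    then show ?thesis using h rho by (intro exI[of _ h] exI[of _ \<rho>] exI[of _ 0]) auto
  next
    case False
    then have n: "n > 0" by simp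
    define C where "C = complex_of_real (1 / \<rho>) \<cdot>\<^sub>m map_mat complex_of_real B"
    have C: "C \<in> carrier_mat n n" using B unfolding C_def by auto
    have Centry: "C $$ (i,l) = complex_of_real (1 / \<rho>) * ((if i = l then 1 else 0) + complex_of_real h * Tc $$ (i,l))"
      if "i < n" "l < n" for i l
      using that T unfolding C_def B_def Tc_def by auto
    have sr: "spectral_radius C < 1"
    proof -
      from spectral_radius_mem_max(1)[OF C n] obtain \<mu> where mu: "\<mu> \<in> spectrum C"
        and sr: "spectral_radius C = cmod \<mu>" by auto
      from mu obtain v where evec: "eigenvector C v \<mu>" unfolding spectrum_def eigenvalue_def by auto
      then have v: "v \<in> carrier_vec n" "v \<noteq> 0\<^sub>v n" and Cv: "C *\<^sub>v v = \<mu> \<cdot>\<^sub>v v"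
        using C unfolding eigenvector_def by auto
      define l where "l = (complex_of_real \<rho> * \<mu> - 1) / complex_of_real h"
      have "Tc *\<^sub>v v = l \<cdot>\<^sub>v v"
      proof (rule eq_vecI)
        fix i assume "i < dim_vec (l \<cdot>\<^sub>v v)"
        then have i: "i < n" using v by auto
        have termk: "C $$ (i,k) * vec_index v k = complex_of_real (1 / \<rho>) * ((if k = i then vec_index v k else 0) + complex_of_real h * (Tc $$ (i,k) * vec_index v k))"
          if "k \<in> {..<n}" for k
          using that i by (cases "k = i") (simp_all add: Centry algebra_simps)
        have "vec_index (C *\<^sub>v v) i = (\<Sum>k<n. C $$ (i,k) * vec_index v k)"
          by (rule mult_mat_vec_entry[OF C v(1) i])
        also have "\<dots> = (\<Sum>k<n. complex_of_real (1 / \<rho>) * ((if k = i then vec_index v k else 0) + complex_of_real h * (Tc $$ (i,k) * vec_index v k)))"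
          by (rule sum.cong[OF refl termk])
        also have "\<dots> = complex_of_real (1 / \<rho>) * ((\<Sum>k<n. (if k = i then vec_index v k else 0)) + complex_of_real h * (\<Sum>k<n. Tc $$ (i,k) * vec_index v k))"
          by (simp only: distrib_left sum.distrib sum_distrib_left)
        also have "(\<Sum>k<n. (if k = i then vec_index v k else 0)) = vec_index v i" using i by simp
        also have "(\<Sum>k<n. Tc $$ (i,k) * vec_index v k) = vec_index (Tc *\<^sub>v v) i"
          by (rule mult_mat_vec_entry[OF Tc v(1) i, symmetric])
        finally have "vec_index (C *\<^sub>v v) i = complex_of_real (1 / \<rho>) * (vec_index v i + complex_of_real h * vec_index (Tc *\<^sub>v v) i)" .
        moreover have "vec_index (C *\<^sub>v v) i = \<mu> * vec_index v i" using Cv v i by simp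
        ultimately have "\<mu> * vec_index v i = complex_of_real (1 / \<rho>) * (vec_index v i + complex_of_real h * vec_index (Tc *\<^sub>v v) i)" by simp
        then have "vec_index (Tc *\<^sub>v v) i = l * vec_index v i"
          using h rho unfolding l_def by (simp add: field_simps)
        then show "vec_index (Tc *\<^sub>v v) i = vec_index (l \<cdot>\<^sub>v v) i" using v i by simp
      qed (use Tc v in auto)
      then have "eigenvector Tc v l" using v Tc unfolding eigenvector_def by auto
      then have "l \<in> spectrum Tc" unfolding spectrum_def eigenvalue_def by auto
      from key[OF this] have "cmod (1 + complex_of_real h * l) < \<rho>" .
      moreover have "1 + complex_of_real h * l = complex_of_real \<rho> * \<mu>"
        using h unfolding l_def by (simp add: field_simps)
      ultimately have "\<rho> * cmod \<mu> < \<rho>" using rho by (simp add: norm_mult)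
      then have "cmod \<mu> < 1" using rho by simp
      then show ?thesis using sr by simp
    qed
    from spectral_radius_jnf_norm_bound_less_1_upper_triangular[OF C sr]
    obtain c where c: "\<And>k. norm_bound (C ^\<^sub>m k) c" by auto
    have "\<bar>(B ^\<^sub>m k) $$ (i,j)\<bar> \<le> c * \<rho> ^ k" if ij: "i < n" "j < n" for k i j
    proof -
      have "C ^\<^sub>m k = complex_of_real (1 / \<rho>) ^ k \<cdot>\<^sub>m (map_mat complex_of_real B) ^\<^sub>m k"
        unfolding C_def by (rule pow_smult_mat) (use B in auto)
      also have "(map_mat complex_of_real B) ^\<^sub>m k = map_mat complex_of_real (B ^\<^sub>m k)"
        by (rule of_real_hom.mat_hom_pow[OF B, symmetric])
      finally have "(C ^\<^sub>m k) $$ (i,j) = complex_of_real ((1 / \<rho>) ^ k * (B ^\<^sub>m k) $$ (i,j))"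
        using ij B by simp
      moreover have "cmod ((C ^\<^sub>m k) $$ (i,j)) \<le> c"
        using c[of k] ij C unfolding norm_bound_def by auto
      ultimately have "cmod (complex_of_real ((1 / \<rho>) ^ k * (B ^\<^sub>m k) $$ (i,j))) \<le> c" by (simp only:)
      then have "\<bar>(1 / \<rho>) ^ k * (B ^\<^sub>m k) $$ (i,j)\<bar> \<le> c" by (simp only: norm_of_real)
      then have "\<bar>(B ^\<^sub>m k) $$ (i,j)\<bar> / \<rho> ^ k \<le> c" using rho by (simp add: abs_mult power_divide)
      then show ?thesis using rho by (simp add: divide_le_eq mult.commute)
    qed
    then show ?thesis using h rho unfolding B_def by blast
  qed
qed

lemma mat_exp_bound_pow:
  fixes B :: "real mat"
  assumes B: "B \<in> carrier_mat n n" and rho: "\<rho> \<ge> 0"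
    and bnd: "\<forall>k i j. i < n \<longrightarrow> j < n \<longrightarrow> \<bar>(B ^\<^sub>m k) $$ (i,j)\<bar> \<le> c * \<rho> ^ k"
    and s: "s \<ge> 0" and ij: "i < n" "j < n"
  shows "\<bar>mat_exp (s \<cdot>\<^sub>m B) $$ (i,j)\<bar> \<le> c * exp (\<rho> * s)"
proof -
  have e: "(\<lambda>k. c * ((\<rho> * s) ^ k / fact k)) sums (c * exp (\<rho> * s))"
    using sums_mult[OF exp_converges[of "\<rho> * s"], of c] by (simp add: divide_inverse mult.commute)
  have le: "\<bar>mcoef B i j k * s ^ k\<bar> \<le> c * ((\<rho> * s) ^ k / fact k)" for k
  proof -
    have "\<bar>mcoef B i j k * s ^ k\<bar> = \<bar>(B ^\<^sub>m k) $$ (i,j)\<bar> * s ^ k / fact k"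
      using s by (simp add: mcoef_def abs_mult)
    also have "\<dots> \<le> c * \<rho> ^ k * s ^ k / fact k"
      using bnd ij s by (intro divide_right_mono mult_right_mono) auto
    finally show ?thesis by (simp add: power_mult_distrib)
  qed
  have "\<bar>mat_exp (s \<cdot>\<^sub>m B) $$ (i,j)\<bar> = \<bar>\<Sum>k. mcoef B i j k * s ^ k\<bar>"
    using mat_exp_entry[OF B ij] by simp
  also have "\<dots> \<le> (\<Sum>k. \<bar>mcoef B i j k * s ^ k\<bar>)"
    by (rule summable_rabs[OF mcoef_summable(1)[OF B ij]])
  also have "\<dots> \<le> (\<Sum>k. c * ((\<rho> * s) ^ k / fact k))"
    by (rule suminf_le[OF le mcoef_summable(1)[OF B ij] sums_summable[OF e]])
  also have "\<dots> = c * exp (\<rho> * s)" using e by (rule sums_unique[symmetric])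
  finally show ?thesis .
qed

lemma mat_exp_decay:
  fixes T :: "real mat"
  assumes T: "T \<in> carrier_mat n n"
    and ev: "\<And>c. eigenvalue (map_mat complex_of_real T) c \<Longrightarrow> Re c < 0"
  shows "\<exists>C \<delta>. \<delta> > 0 \<and> (\<forall>x\<ge>0. \<forall>i<n. \<forall>j<n. \<bar>mat_exp (x \<cdot>\<^sub>m T) $$ (i,j)\<bar> \<le> C * exp (- \<delta> * x))"
proof -
  obtain h \<rho> c where h: "h > 0" and rho: "0 < \<rho>" "\<rho> < 1"
    and bnd: "\<forall>k i j. i < n \<longrightarrow> j < n \<longrightarrow> \<bar>((1\<^sub>m n + h \<cdot>\<^sub>m T) ^\<^sub>m k) $$ (i,j)\<bar> \<le> c * \<rho> ^ k"
    using spectral_shift[OF T ev] by blast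
  define B where "B = 1\<^sub>m n + h \<cdot>\<^sub>m T"
  have B: "B \<in> carrier_mat n n" using T unfolding B_def by auto
  have "\<bar>mat_exp (x \<cdot>\<^sub>m T) $$ (i,j)\<bar> \<le> c * exp (- ((1 - \<rho>) / h) * x)"
    if x: "x \<ge> 0" and ij: "i < n" "j < n" for x i j
  proof -
    have "mat_exp (x \<cdot>\<^sub>m T) $$ (i,j) = exp (- x / h) * mat_exp ((x / h) \<cdot>\<^sub>m B) $$ (i,j)"
      using mat_exp_shift[OF T h, of x, folded B_def] carrier_matD[OF mat_exp_carrier[OF B, of "x / h"]] ij by simp
    then have "\<bar>mat_exp (x \<cdot>\<^sub>m T) $$ (i,j)\<bar> = exp (- x / h) * \<bar>mat_exp ((x / h) \<cdot>\<^sub>m B) $$ (i,j)\<bar>"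
      by (simp add: abs_mult)
    also have "\<dots> \<le> exp (- x / h) * (c * exp (\<rho> * (x / h)))"
      by (intro mult_left_mono mat_exp_bound_pow[OF B _ bnd[folded B_def]]) (use rho h x ij in auto)
    also have "\<dots> = c * exp (- ((1 - \<rho>) / h) * x)"
    proof -
      have "- x / h + \<rho> * (x / h) = - ((1 - \<rho>) / h) * x" using h by (simp add: field_simps)
      then have "exp (- x / h) * exp (\<rho> * (x / h)) = exp (- ((1 - \<rho>) / h) * x)"
        by (simp only: exp_add[symmetric])
      then show ?thesis by simp
    qed
    finally show ?thesis .
  qed
  moreover have "(1 - \<rho>) / h > 0" using rho h by simp
  ultimately show ?thesis by blast
qed

lemma scalar_mult_expand:
  assumes M: "M \<in> carrier_mat n n" and a: "\<alpha> \<in> carrier_vec n" and w: "w \<in> carrier_vec n"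
  shows "scalar_prod \<alpha> (M *\<^sub>v w) = (\<Sum>i<n. \<Sum>j<n. vec_index \<alpha> i * M $$ (i,j) * vec_index w j)"
proof -
  have "scalar_prod \<alpha> (M *\<^sub>v w) = (\<Sum>i<n. vec_index \<alpha> i * vec_index (M *\<^sub>v w) i)"
    using M by (simp add: scalar_prod_def lessThan_atLeast0)
  also have "\<dots> = (\<Sum>i<n. vec_index \<alpha> i * (\<Sum>j<n. M $$ (i,j) * vec_index w j))"
  proof (rule sum.cong[OF refl])
    fix i assume "i \<in> {..<n}"
    then show "vec_index \<alpha> i * vec_index (M *\<^sub>v w) i = vec_index \<alpha> i * (\<Sum>j<n. M $$ (i,j) * vec_index w j)"
      using mult_mat_vec_entry[OF M w, of i] by simp
  qed
  also have "\<dots> = (\<Sum>i<n. \<Sum>j<n. vec_index \<alpha> i * M $$ (i,j) * vec_index w j)"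
    by (simp add: sum_distrib_left mult.assoc)
  finally show ?thesis .
qed

lemma ME_expand:
  assumes T: "T \<in> carrier_mat n n" and a: "\<alpha> \<in> carrier_vec n" and w: "w \<in> carrier_vec n"
  shows "ME_fun \<alpha> T w x = (\<Sum>i<n. \<Sum>j<n. vec_index \<alpha> i * mat_exp (x \<cdot>\<^sub>m T) $$ (i,j) * vec_index w j)"
  unfolding ME_fun_def by (rule scalar_mult_expand[OF mat_exp_carrier[OF T] a w])

lemma ME_deriv:
  assumes T: "T \<in> carrier_mat n n" and a: "\<alpha> \<in> carrier_vec n" and w: "w \<in> carrier_vec n"
  shows "(ME_fun \<alpha> T w has_real_derivative ME_fun \<alpha> T (T *\<^sub>v w) x) (at x)"
proof -
  have e: "ME_fun \<alpha> T w = (\<lambda>x. \<Sum>i<n. \<Sum>j<n. vec_index \<alpha> i * mat_exp (x \<cdot>\<^sub>m T) $$ (i,j) * vec_index w j)"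
    by (rule ext, rule ME_expand[OF T a w])
  have "ME_fun \<alpha> T (T *\<^sub>v w) x = scalar_prod \<alpha> ((mat_exp (x \<cdot>\<^sub>m T) * T) *\<^sub>v w)"
    unfolding ME_fun_def using T w by (subst assoc_mult_mat_vec) auto
  also have "\<dots> = (\<Sum>i<n. \<Sum>j<n. vec_index \<alpha> i * (mat_exp (x \<cdot>\<^sub>m T) * T) $$ (i,j) * vec_index w j)"
    by (rule scalar_mult_expand[OF _ a w]) (use T in auto)
  finally have e2: "ME_fun \<alpha> T (T *\<^sub>v w) x = \<dots>" .
  show ?thesis unfolding e e2
    by (intro DERIV_sum DERIV_cmult_right DERIV_cmult mat_exp_deriv[OF T]) auto
qed

lemma ME_cont:
  assumes T: "T \<in> carrier_mat n n" and a: "\<alpha> \<in> carrier_vec n" and w: "w \<in> carrier_vec n"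
  shows "continuous_on UNIV (ME_fun \<alpha> T w)" "isCont (ME_fun \<alpha> T w) x"
proof -
  show c: "isCont (ME_fun \<alpha> T w) x" for x by (rule DERIV_isCont[OF ME_deriv[OF T a w]])
  show "continuous_on UNIV (ME_fun \<alpha> T w)" by (intro continuous_at_imp_continuous_on ballI c)
qed

lemma ME_decay:
  assumes T: "T \<in> carrier_mat n n" and a: "\<alpha> \<in> carrier_vec n" and w: "w \<in> carrier_vec n"
    and ev: "\<And>c. eigenvalue (map_mat complex_of_real T) c \<Longrightarrow> Re c < 0"
  shows "\<exists>C \<delta>. \<delta> > 0 \<and> C \<ge> 0 \<and> (\<forall>x\<ge>0. \<bar>ME_fun \<alpha> T w x\<bar> \<le> C * exp (- \<delta> * x))"
proof -
  obtain C \<delta> where d: "\<delta> > 0" and b: "\<And>x i j. x \<ge> 0 \<Longrightarrow> i < n \<Longrightarrow> j < n \<Longrightarrow> \<bar>mat_exp (x \<cdot>\<^sub>m T) $$ (i,j)\<bar> \<le> C * exp (- \<delta> * x)"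
    using mat_exp_decay[OF T ev] by blast
  define K where "K = (\<Sum>i<n. \<Sum>j<n. \<bar>vec_index \<alpha> i\<bar> * \<bar>vec_index w j\<bar>)"
  have K: "K \<ge> 0" unfolding K_def by (intro sum_nonneg) auto
  have "\<bar>ME_fun \<alpha> T w x\<bar> \<le> (K * \<bar>C\<bar>) * exp (- \<delta> * x)" if x: "x \<ge> 0" for x
  proof -
    have "\<bar>ME_fun \<alpha> T w x\<bar> \<le> (\<Sum>i<n. \<Sum>j<n. \<bar>vec_index \<alpha> i * mat_exp (x \<cdot>\<^sub>m T) $$ (i,j) * vec_index w j\<bar>)"
      unfolding ME_expand[OF T a w] by (rule order_trans[OF sum_abs], intro sum_mono sum_abs)
    also have "\<dots> \<le> (\<Sum>i<n. \<Sum>j<n. (\<bar>vec_index \<alpha> i\<bar> * \<bar>vec_index w j\<bar>) * (\<bar>C\<bar> * exp (- \<delta> * x)))"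
    proof (intro sum_mono)
      fix i j assume "i \<in> {..<n}" "j \<in> {..<n}"
      then have ij: "i < n" "j < n" by auto
      have "\<bar>mat_exp (x \<cdot>\<^sub>m T) $$ (i,j)\<bar> \<le> \<bar>C\<bar> * exp (- \<delta> * x)"
        using b[OF x ij] by (smt (verit) exp_gt_zero mult_right_mono)
      then have "(\<bar>vec_index \<alpha> i\<bar> * \<bar>vec_index w j\<bar>) * \<bar>mat_exp (x \<cdot>\<^sub>m T) $$ (i,j)\<bar> \<le> (\<bar>vec_index \<alpha> i\<bar> * \<bar>vec_index w j\<bar>) * (\<bar>C\<bar> * exp (- \<delta> * x))"
        by (intro mult_left_mono) auto
      then show "\<bar>vec_index \<alpha> i * mat_exp (x \<cdot>\<^sub>m T) $$ (i,j) * vec_index w j\<bar> \<le> (\<bar>vec_index \<alpha> i\<bar> * \<bar>vec_index w j\<bar>) * (\<bar>C\<bar> * exp (- \<delta> * x))"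
        by (simp add: abs_mult mult_ac)
    qed
    also have "\<dots> = (K * \<bar>C\<bar>) * exp (- \<delta> * x)"
      unfolding K_def by (simp only: sum_distrib_right) (simp add: mult_ac)
    finally show ?thesis .
  qed
  then show ?thesis using d K by (intro exI[of _ "K * \<bar>C\<bar>"] exI[of _ \<delta>]) auto
qed

lemma erlang_moment_integrable:
  assumes "l > 0"
  shows "integrable lborel (\<lambda>x. erlang_density 0 l x * x ^ r)"
proof (rule integrableI_nonneg)
  show "(\<lambda>x. erlang_density 0 l x * x ^ r) \<in> borel_measurable lborel" by measurable
  show "AE x in lborel. 0 \<le> erlang_density 0 l x * x ^ r"
    using assms by (auto simp: erlang_density_def)
  show "(\<integral>\<^sup>+ x. ennreal (erlang_density 0 l x * x ^ r) \<partial>lborel) < \<infinity>"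
    using nn_integral_erlang_ith_moment[OF assms, of 0 r] by simp
qed

lemma ME_integrable:
  assumes T: "T \<in> carrier_mat n n" and a: "\<alpha> \<in> carrier_vec n" and w: "w \<in> carrier_vec n"
    and ev: "\<And>c. eigenvalue (map_mat complex_of_real T) c \<Longrightarrow> Re c < 0"
  shows "set_integrable lborel {0..} (\<lambda>x. x ^ r * ME_fun \<alpha> T w x)"
proof -
  obtain C \<delta> where d: "\<delta> > 0" and C: "C \<ge> 0" and b: "\<And>x. x \<ge> 0 \<Longrightarrow> \<bar>ME_fun \<alpha> T w x\<bar> \<le> C * exp (- \<delta> * x)"
    using ME_decay[OF T a w ev] by blast
  have [measurable]: "ME_fun \<alpha> T w \<in> borel_measurable borel"
    by (rule borel_measurable_continuous_onI[OF ME_cont(1)[OF T a w]])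
  show ?thesis unfolding set_integrable_def
  proof (rule Bochner_Integration.integrable_bound)
    show "integrable lborel (\<lambda>x. (C / \<delta>) * (erlang_density 0 \<delta> x * x ^ r))"
      by (intro integrable_mult_right erlang_moment_integrable d)
    show "(\<lambda>x. indicator {0..} x *\<^sub>R (x ^ r * ME_fun \<alpha> T w x)) \<in> borel_measurable lborel"
      by measurable
    show "AE x in lborel. norm (indicator {0..} x *\<^sub>R (x ^ r * ME_fun \<alpha> T w x)) \<le> norm ((C / \<delta>) * (erlang_density 0 \<delta> x * x ^ r))"
    proof (rule AE_I2)
      fix x :: real
      show "norm (indicator {0..} x *\<^sub>R (x ^ r * ME_fun \<alpha> T w x)) \<le> norm ((C / \<delta>) * (erlang_density 0 \<delta> x * x ^ r))"
      proof (cases "x \<ge> 0")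
        case True
        have "norm (indicator {0..} x *\<^sub>R (x ^ r * ME_fun \<alpha> T w x)) = x ^ r * \<bar>ME_fun \<alpha> T w x\<bar>"
          using True by (simp add: abs_mult)
        also have "\<dots> \<le> x ^ r * (C * exp (- \<delta> * x))"
          using b[OF True] True by (intro mult_left_mono) auto
        also have "\<dots> = (C / \<delta>) * (erlang_density 0 \<delta> x * x ^ r)"
          using True d by (simp add: erlang_density_def)
        also have "\<dots> \<le> norm ((C / \<delta>) * (erlang_density 0 \<delta> x * x ^ r))" unfolding real_norm_def by (rule abs_ge_self)
        finally show ?thesis .
      qed auto
    qed
  qed
qed

lemma ME_neg:
  assumes T: "T \<in> carrier_mat n n" and a: "\<alpha> \<in> carrier_vec n" and w: "w \<in> carrier_vec n"
  shows "ME_fun \<alpha> T (- w) x = - ME_fun \<alpha> T w x"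
proof -
  have w': "- w \<in> carrier_vec n" using w by simp
  show ?thesis unfolding ME_expand[OF T a w] ME_expand[OF T a w']
    using w by (simp add: sum_negf[symmetric])
qed

lemma ME_step:
  assumes T: "T \<in> carrier_mat n n" and a: "\<alpha> \<in> carrier_vec n" and w: "w \<in> carrier_vec n"
    and ev: "\<And>c. eigenvalue (map_mat complex_of_real T) c \<Longrightarrow> Re c < 0"
    and Ai: "Ainv \<in> carrier_mat n n" "(- T) * Ainv = 1\<^sub>m n"
  shows "(LINT x:{0..}|lborel. x ^ r * ME_fun \<alpha> T w x) =
         (if r = 0 then scalar_prod \<alpha> (Ainv *\<^sub>v w)
          else real r * (LINT x:{0..}|lborel. x ^ (r - 1) * ME_fun \<alpha> T (Ainv *\<^sub>v w) x))"
proof -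
  define w' where "w' = Ainv *\<^sub>v w"
  have w': "w' \<in> carrier_vec n" unfolding w'_def using Ai w by simp
  have TA: "T * Ainv = - 1\<^sub>m n"
  proof -
    have "(- T) * Ainv = - (T * Ainv)" by (rule uminus_mult_left_mat) (use T Ai in auto)
    then have "- (T * Ainv) = 1\<^sub>m n" using Ai by simp
    then have "- (- (T * Ainv)) = - 1\<^sub>m n" by simp
    then show ?thesis by simp
  qed
  have Tw': "T *\<^sub>v w' = - w"
  proof -
    have "T *\<^sub>v w' = (T * Ainv) *\<^sub>v w" unfolding w'_def using T Ai w by (simp add: assoc_mult_mat_vec)
    also have "\<dots> = - (1\<^sub>m n *\<^sub>v w)" unfolding TA by (rule uminus_mult_mat_vec) (use w in auto)
    finally show ?thesis using w by simp
  qed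
  let ?p = "ME_fun \<alpha> T w" and ?q = "ME_fun \<alpha> T w'"
  define G where "G x = x ^ r * ?q x" for x
  define f where "f x = real r * (x ^ (r - 1) * ?q x) - x ^ r * ?p x" for x
  have dG: "(G has_real_derivative f x) (at x)" for x
  proof -
    have "(G has_real_derivative (real r * x ^ (r - 1)) * ?q x + ME_fun \<alpha> T (T *\<^sub>v w') x * x ^ r) (at x)"
      unfolding G_def using DERIV_mult[OF DERIV_pow[of r x] ME_deriv[OF T a w', of x]] by simp
    then show ?thesis unfolding Tw' ME_neg[OF T a w] f_def by (simp add: algebra_simps)
  qed
  have Ip: "set_integrable lborel {0..} (\<lambda>x. x ^ r * ?p x)" by (rule ME_integrable[OF T a w ev])
  have Iq: "set_integrable lborel {0..} (\<lambda>x. x ^ (r - 1) * ?q x)" by (rule ME_integrable[OF T a w' ev])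
  have If: "set_integrable lborel {0..} f"
    unfolding f_def by (intro set_integral_diff(1) set_integrable_mult_right Iq Ip)
  have If': "set_integrable lborel {0<..} f" by (rule set_integrable_subset[OF If]) auto
  have cq: "isCont ?q x" for x by (rule ME_cont(2)[OF T a w'])
  have cp: "isCont ?p x" for x by (rule ME_cont(2)[OF T a w])
  have cf: "isCont f x" for x unfolding f_def by (intro continuous_intros cq cp)
  have cG: "isCont G x" for x unfolding G_def by (intro continuous_intros cq)
  have lim0: "(G \<longlongrightarrow> G 0) (at_right 0)"
    by (rule tendsto_mono[OF at_within_le_at isContD[OF cG]])
  have limtop: "(G \<longlongrightarrow> 0) at_top"
  proof -
    obtain C \<delta> where d: "\<delta> > 0" and C: "C \<ge> 0" and b: "\<And>x. x \<ge> 0 \<Longrightarrow> \<bar>?q x\<bar> \<le> C * exp (- \<delta> * x)"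
      using ME_decay[OF T a w' ev] by blast
    have g: "((\<lambda>x. C * (x ^ r * exp (- \<delta> * x))) \<longlongrightarrow> 0) at_top"
      using d by real_asymp
    have ev: "eventually (\<lambda>x. norm (G x) \<le> C * (x ^ r * exp (- \<delta> * x))) at_top"
    proof (rule eventually_mono[OF eventually_ge_at_top[of 0]])
      fix x :: real assume x: "0 \<le> x"
      have "norm (G x) = x ^ r * \<bar>?q x\<bar>" unfolding G_def using x by (simp add: abs_mult)
      also have "\<dots> \<le> x ^ r * (C * exp (- \<delta> * x))" using b[OF x] x by (intro mult_left_mono) auto
      finally show "norm (G x) \<le> C * (x ^ r * exp (- \<delta> * x))" by (simp add: mult_ac)
    qed
    show ?thesis by (rule Lim_null_comparison[OF ev g])
  qed
  have ftc: "(LBINT x=ereal 0..\<infinity>. f x) = 0 - G 0"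
  proof (rule interval_integral_FTC_integrable)
    show "ereal 0 < \<infinity>" by simp
    show "(G has_vector_derivative f x) (at x)" for x
      using dG[of x] by (simp add: has_real_derivative_iff_has_vector_derivative)
    show "isCont f x" for x by (rule cf)
    show "set_integrable lborel (einterval (ereal 0) \<infinity>) f" using If' by (simp add: einterval_eq_Ici)
    show "((G \<circ> real_of_ereal) \<longlongrightarrow> G 0) (at_right (ereal 0))"
      using lim0 by (simp add: ereal_tendsto_simps1)
    show "((G \<circ> real_of_ereal) \<longlongrightarrow> 0) (at_left \<infinity>)"
      using limtop by (simp add: ereal_tendsto_simps1)
  qed
  have "(LBINT x=ereal 0..\<infinity>. f x) = (LINT x:{0<..}|lborel. f x)"
    by (rule interval_integral_to_infinity_eq)
  also have "\<dots> = (LINT x:{0..}|lborel. f x)"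
  proof (rule set_integral_cong_set)
    show "set_borel_measurable lborel {0..} f"
      using If unfolding set_integrable_def set_borel_measurable_def by (rule borel_measurable_integrable)
    show "set_borel_measurable lborel {0<..} f"
      using If' unfolding set_integrable_def set_borel_measurable_def by (rule borel_measurable_integrable)
    show "AE x in lborel. ((x::real) \<in> {0..}) = (x \<in> {0<..})"
      using AE_lborel_singleton[of 0] by eventually_elim auto
  qed
  also have "\<dots> = real r * (LINT x:{0..}|lborel. x ^ (r - 1) * ?q x) - (LINT x:{0..}|lborel. x ^ r * ?p x)"
  proof -
    have Iq': "set_integrable lborel {0..} (\<lambda>x. real r * (x ^ (r - 1) * ?q x))"
      by (rule set_integrable_mult_right) (rule Iq)
    show ?thesis unfolding f_def
      by (subst set_integral_diff(2)[OF Iq' Ip]) (simp add: set_integral_mult_right)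
  qed
  finally have main: "(LINT x:{0..}|lborel. x ^ r * ?p x) = real r * (LINT x:{0..}|lborel. x ^ (r - 1) * ?q x) + G 0"
    using ftc by simp
  have q0: "?q 0 = scalar_prod \<alpha> w'"
    unfolding ME_fun_def using mat_exp_zero[OF T] w' by simp
  show ?thesis
  proof (cases "r = 0")
    case True
    then show ?thesis using main q0 unfolding G_def w'_def by simp
  next
    case False
    then show ?thesis using main unfolding G_def w'_def by simp
  qed
qed

lemma ME_moment:
  assumes T: "T \<in> carrier_mat n n" and a: "\<alpha> \<in> carrier_vec n"
    and ev: "\<And>c. eigenvalue (map_mat complex_of_real T) c \<Longrightarrow> Re c < 0"
    and Ai: "Ainv \<in> carrier_mat n n" "(- T) * Ainv = 1\<^sub>m n"
  shows "w \<in> carrier_vec n \<Longrightarrow> (LINT x:{0..}|lborel. x ^ r * ME_fun \<alpha> T w x) = fact r * scalar_prod \<alpha> ((Ainv ^\<^sub>m (r + 1)) *\<^sub>v w)"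
proof (induction r arbitrary: w)
  case 0
  have "Ainv ^\<^sub>m (0 + 1) = Ainv" using Ai by simp
  then show ?case using ME_step[OF T a 0 ev Ai, of 0] by simp
next
  case (Suc r)
  have w': "Ainv *\<^sub>v w \<in> carrier_vec n" using Ai Suc.prems by simp
  have "(LINT x:{0..}|lborel. x ^ Suc r * ME_fun \<alpha> T w x) =
        real (Suc r) * (LINT x:{0..}|lborel. x ^ r * ME_fun \<alpha> T (Ainv *\<^sub>v w) x)"
    using ME_step[OF T a Suc.prems ev Ai, of "Suc r"] by simp
  also have "\<dots> = real (Suc r) * (fact r * scalar_prod \<alpha> ((Ainv ^\<^sub>m (r + 1)) *\<^sub>v (Ainv *\<^sub>v w)))"
    using Suc.IH[OF w'] by simp
  also have "(Ainv ^\<^sub>m (r + 1)) *\<^sub>v (Ainv *\<^sub>v w) = (Ainv ^\<^sub>m (Suc r + 1)) *\<^sub>v w"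
  proof -
    have "(Ainv ^\<^sub>m (r + 1) * Ainv) *\<^sub>v w = Ainv ^\<^sub>m (r + 1) *\<^sub>v (Ainv *\<^sub>v w)"
      by (rule assoc_mult_mat_vec) (use Ai Suc.prems in auto)
    moreover have "Ainv ^\<^sub>m (Suc r + 1) = Ainv ^\<^sub>m (r + 1) * Ainv" by simp
    ultimately show ?thesis by simp
  qed
  finally show ?case by simp
qed

lemma inverse_exists:
  fixes T :: "real mat"
  assumes T: "T \<in> carrier_mat n n"
    and ev: "\<And>c. eigenvalue (map_mat complex_of_real T) c \<Longrightarrow> Re c < 0"
  shows "\<exists>Ainv. mat_inverse (- T) = Some Ainv \<and> Ainv \<in> carrier_mat n n \<and> (- T) * Ainv = 1\<^sub>m n"
proof (cases "mat_inverse (- T)")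
  case None
  have mT: "- T \<in> carrier_mat n n" using T by simp
  from mat_inverse(1)[OF mT None, of "()"] have "\<not> (- T) \<in> Units (ring_mat TYPE(real) n ())" .
  then have "det (- T) = 0" using det_non_zero_imp_unit[OF mT, where b="()"] by blast
  then obtain v where v: "v \<in> carrier_vec n" "v \<noteq> 0\<^sub>v n" "(- T) *\<^sub>v v = 0\<^sub>v n"
    using det_0_iff_vec_prod_zero_field[OF mT] by blast
  define Tc where "Tc = map_mat complex_of_real T"
  define vc where "vc = map_vec complex_of_real v"
  have Tc: "Tc \<in> carrier_mat n n" unfolding Tc_def using T by simp
  have vc: "vc \<in> carrier_vec n" unfolding vc_def using v by simp
  have "Tc *\<^sub>v vc = 0 \<cdot>\<^sub>v vc"
  proof (rule eq_vecI)
    fix i assume "i < dim_vec (0 \<cdot>\<^sub>v vc)"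
    then have i: "i < n" using vc by simp
    have "vec_index ((- T) *\<^sub>v v) i = 0" using v i by simp
    then have "(\<Sum>k<n. (- T) $$ (i,k) * vec_index v k) = 0" using mult_mat_vec_entry[OF mT v(1) i] by simp
    then have "(\<Sum>k<n. T $$ (i,k) * vec_index v k) = 0"
      using T i by (simp add: sum_negf)
    then have "vec_index (Tc *\<^sub>v vc) i = 0"
    proof -
      assume s0: "(\<Sum>k<n. T $$ (i,k) * vec_index v k) = 0"
      have "vec_index (Tc *\<^sub>v vc) i = (\<Sum>k<n. Tc $$ (i,k) * vec_index vc k)"
        by (rule mult_mat_vec_entry[OF Tc vc i])
      also have "\<dots> = (\<Sum>k<n. complex_of_real (T $$ (i,k) * vec_index v k))"
        by (rule sum.cong[OF refl]) (use T v i in \<open>auto simp: Tc_def vc_def\<close>)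
      also have "\<dots> = complex_of_real (\<Sum>k<n. T $$ (i,k) * vec_index v k)" by (simp only: of_real_sum)
      also have "\<dots> = 0" using s0 by simp
      finally show ?thesis .
    qed
    then show "vec_index (Tc *\<^sub>v vc) i = vec_index (0 \<cdot>\<^sub>v vc) i" using vc i by simp
  qed (use Tc vc in auto)
  moreover have "vc \<noteq> 0\<^sub>v n"
  proof
    assume "vc = 0\<^sub>v n"
    then have "v = 0\<^sub>v n" using v(1) unfolding vc_def by (auto simp: vec_eq_iff)
    then show False using v(2) by simp
  qed
  ultimately have "eigenvalue Tc 0" unfolding eigenvalue_def eigenvector_def using vc Tc by auto
  then show ?thesis using ev unfolding Tc_def by force
next
  case (Some B)
  have mT: "- T \<in> carrier_mat n n" using T by simp
  from mat_inverse(2)[OF mT Some] show ?thesis using Some by blast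
qed

lemma psf_lborel: "product_sigma_finite (\<lambda>_::nat. (lborel :: real measure))"
  unfolding product_sigma_finite_def by (simp add: lborel.sigma_finite_measure_axioms)

lemma prod_indicator_PiE:
  assumes "finite I" "y \<in> extensional I"
  shows "(\<Prod>m\<in>I. indicator A (y m) :: real) = indicator (PiE I (\<lambda>_. A)) y"
proof (cases "y \<in> PiE I (\<lambda>_. A)")
  case True
  then show ?thesis by (auto simp: PiE_iff indicator_def)
next
  case False
  then obtain m where "m \<in> I" "y m \<notin> A" using assms(2) by (auto simp: PiE_iff)
  then show ?thesis using False assms(1) by (auto simp: indicator_def intro!: prod_zero)
qed

lemma orthant_sets: "orthant k \<in> sets (PiM {1..k} (\<lambda>_. lborel))"
  unfolding orthant_def by (rule sets_PiM_I_finite) auto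

lemma prod_set_integral:
  fixes g :: "nat \<Rightarrow> real \<Rightarrow> real"
  assumes g: "\<And>m. m \<in> {1..k} \<Longrightarrow> set_integrable lborel {0..} (g m)"
  shows "set_integrable (PiM {1..k} (\<lambda>_. lborel)) (orthant k) (\<lambda>y. \<Prod>m\<in>{1..k}. g m (y m))"
    "(LINT y:orthant k|PiM {1..k} (\<lambda>_. lborel). (\<Prod>m\<in>{1..k}. g m (y m))) = (\<Prod>m\<in>{1..k}. LINT x:{0..}|lborel. g m x)"
proof -
  interpret product_sigma_finite "\<lambda>_::nat. (lborel :: real measure)" by (rule psf_lborel)
  let ?h = "\<lambda>m x. indicator {0..} x * g m x"
  have hi: "integrable lborel (?h m)" if "m \<in> {1..k}" for m
    using g[OF that] unfolding set_integrable_def by simp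
  have eq: "indicator (orthant k) y *\<^sub>R (\<Prod>m\<in>{1..k}. g m (y m)) = (\<Prod>m\<in>{1..k}. ?h m (y m))"
    if "y \<in> space (PiM {1..k} (\<lambda>_. lborel))" for y
  proof -
    have y: "y \<in> extensional {1..k}" using that by (simp add: space_PiM PiE_def)
    have "indicator (orthant k) y = (\<Prod>m\<in>{1..k}. indicator {0..} (y m) :: real)"
      unfolding orthant_def by (rule prod_indicator_PiE[symmetric]) (use y in auto)
    then show ?thesis by (simp add: prod.distrib)
  qed
  have int: "integrable (PiM {1..k} (\<lambda>_. lborel)) (\<lambda>y. \<Prod>m\<in>{1..k}. ?h m (y m))"
    by (rule product_integrable_prod) (auto intro: hi)
  show "set_integrable (PiM {1..k} (\<lambda>_. lborel)) (orthant k) (\<lambda>y. \<Prod>m\<in>{1..k}. g m (y m))"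
    unfolding set_integrable_def using int by (subst Bochner_Integration.integrable_cong[OF refl eq]) auto
  have "(LINT y:orthant k|PiM {1..k} (\<lambda>_. lborel). (\<Prod>m\<in>{1..k}. g m (y m)))
      = (LINT y|PiM {1..k} (\<lambda>_. lborel). (\<Prod>m\<in>{1..k}. ?h m (y m)))"
    unfolding set_lebesgue_integral_def by (rule Bochner_Integration.integral_cong[OF refl eq])
  also have "\<dots> = (\<Prod>m\<in>{1..k}. integral\<^sup>L lborel (?h m))"
    by (rule product_integral_prod) (auto intro: hi)
  also have "\<dots> = (\<Prod>m\<in>{1..k}. LINT x:{0..}|lborel. g m x)"
    unfolding set_lebesgue_integral_def by simp
  finally show "(LINT y:orthant k|PiM {1..k} (\<lambda>_. lborel). (\<Prod>m\<in>{1..k}. g m (y m))) = (\<Prod>m\<in>{1..k}. LINT x:{0..}|lborel. g m x)" .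
qed

lemma set_integral_sum_cmult:
  fixes h :: "'i \<Rightarrow> 'a \<Rightarrow> real"
  assumes S: "finite S" and h: "\<And>i. i \<in> S \<Longrightarrow> set_integrable M A (h i)"
  shows "set_integrable M A (\<lambda>y. \<Sum>i\<in>S. c i * h i y)"
    "(LINT y:A|M. (\<Sum>i\<in>S. c i * h i y)) = (\<Sum>i\<in>S. c i * (LINT y:A|M. h i y))"
proof -
  have eq: "indicator A y *\<^sub>R (\<Sum>i\<in>S. c i * h i y) = (\<Sum>i\<in>S. c i * (indicator A y *\<^sub>R h i y))" for y
    by (simp add: sum_distrib_left mult_ac)
  have hi: "integrable M (\<lambda>y. indicator A y *\<^sub>R h i y)" if "i \<in> S" for i
    using h[OF that] unfolding set_integrable_def .
  show "set_integrable M A (\<lambda>y. \<Sum>i\<in>S. c i * h i y)"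
    unfolding set_integrable_def eq by (intro Bochner_Integration.integrable_sum Bochner_Integration.integrable_mult_right hi)
  show "(LINT y:A|M. (\<Sum>i\<in>S. c i * h i y)) = (\<Sum>i\<in>S. c i * (LINT y:A|M. h i y))"
    unfolding set_lebesgue_integral_def eq
    by (subst Bochner_Integration.integral_sum) (use hi[unfolded real_scaleR_def] in \<open>auto intro!: Bochner_Integration.integrable_mult_right\<close>)
qed

theorem theorem1:
  fixes L M k :: nat
    and \<alpha> :: "nat \<Rightarrow> real vec" and T :: "nat \<Rightarrow> real mat" and t :: "nat \<Rightarrow> real vec"
    and p :: "(nat \<Rightarrow> nat) \<Rightarrow> real"
    and x :: "nat \<Rightarrow> real"
  defines "fs \<equiv> \<lambda>j. ME_fun (\<alpha> j) (T j) (t j)"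
  defines "f \<equiv> mix L M fs p"
  defines "q \<equiv> \<lambda>i. if k < M
              then p i * (\<Prod>m\<in>{k+1..M}. fs (i m) (x m)) /
                   (\<Sum>h\<in>idx L M. p h * (\<Prod>m\<in>{k+1..M}. fs (h m) (x m)))
              else p i"
  assumes "L \<ge> 1" and "M \<ge> 1"
    and ME: "\<And>j. j \<in> {1..L} \<Longrightarrow> ME_triple (\<alpha> j) (T j) (t j)"
    and dens: "MMEam_weights L M fs p"
    and k: "1 \<le> k" "k \<le> M"
    and xnn: "\<And>m. m \<in> {k+1..M} \<Longrightarrow> x m \<ge> 0"
    and defined: "marg k f x > 0"
  shows "(\<forall>y\<in>orthant k. fcon k f x y =
            (\<Sum>i\<in>idx L M. q i * (\<Prod>j\<in>{1..k}. fs (i j) (y j))))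
       \<and> is_MMEam L k fs (fcon k f x)
       \<and> (\<forall>r :: nat \<Rightarrow> nat.
            set_integrable (PiM {1..k} (\<lambda>_. lborel)) (orthant k)
              (\<lambda>y. (\<Prod>j\<in>{1..k}. y j ^ r j) * fcon k f x y)
          \<and> (LINT y:orthant k|PiM {1..k} (\<lambda>_. lborel).
                (\<Prod>j\<in>{1..k}. y j ^ r j) * fcon k f x y)
            = (\<Sum>i\<in>idx L M. q i * (\<Prod>j\<in>{1..k}.
                 fact (r j) * (\<alpha> (i j) \<bullet> ((the (mat_inverse (- T (i j))) ^\<^sub>m (r j + 1)) *\<^sub>v t (i j))))))"
proof -
  have fin: "finite (idx L M)" unfolding idx_def by (simp add: finite_PiE)
  have idx_range: "i m \<in> {1..L}" if "i \<in> idx L M" "m \<in> {1..M}" for i m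
    using that unfolding idx_def by (auto simp: PiE_iff)
  have F1: "set_integrable lborel {0..} (fs j) \<and> (LINT z:{0..}|lborel. fs j z) = 1" if j: "j \<in> {1..L}" for j
  proof -
    have "ME_triple (\<alpha> j) (T j) (t j)" by (rule ME[OF j])
    then show ?thesis unfolding ME_triple_def fs_def by (elim conjE) (intro conjI; assumption)
  qed
  have F2: "set_integrable lborel {0..} (\<lambda>z. z ^ r * fs j z) \<and>
      (LINT z:{0..}|lborel. z ^ r * fs j z) = fact r * (\<alpha> j \<bullet> ((the (mat_inverse (- T j)) ^\<^sub>m (r + 1)) *\<^sub>v t j))"
    if j: "j \<in> {1..L}" for j r
  proof -
    have tr: "ME_triple (\<alpha> j) (T j) (t j)" by (rule ME[OF j])
    have ex: "\<exists>n. T j \<in> carrier_mat n n \<and> dim_vec (\<alpha> j) = n \<and> dim_vec (t j) = n"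
      using tr unfolding ME_triple_def by (elim conjE) assumption
    have ev0: "\<forall>c. eigenvalue (map_mat complex_of_real (T j)) c \<longrightarrow> Re c < 0"
      using tr unfolding ME_triple_def by (elim conjE) assumption
    obtain nn where nn: "T j \<in> carrier_mat nn nn \<and> dim_vec (\<alpha> j) = nn \<and> dim_vec (t j) = nn"
      by (rule exE[OF ex])
    have T: "T j \<in> carrier_mat nn nn" using nn by (rule conjunct1)
    have da: "dim_vec (\<alpha> j) = nn" using nn by (elim conjE) assumption
    have dt: "dim_vec (t j) = nn" using nn by (elim conjE) assumption
    have a: "\<alpha> j \<in> carrier_vec nn" unfolding carrier_vec_def using da by (rule CollectI)
    have w: "t j \<in> carrier_vec nn" unfolding carrier_vec_def using dt by (rule CollectI)
    have ev: "\<And>c. eigenvalue (map_mat complex_of_real (T j)) c \<Longrightarrow> Re c < 0" using ev0 by blast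
    obtain Ainv where Ai: "mat_inverse (- T j) = Some Ainv" "Ainv \<in> carrier_mat nn nn" "(- T j) * Ainv = 1\<^sub>m nn"
      using inverse_exists[OF T ev] by blast
    have th: "the (mat_inverse (- T j)) = Ainv" using Ai(1) by simp
    show ?thesis unfolding fs_def th
      by (intro conjI ME_integrable[OF T a w ev] ME_moment[OF T a ev Ai(2,3) w])
  qed
  define P where "P i = p i * (\<Prod>m\<in>{k+1..M}. fs (i m) (x m))" for i
  define D where "D = (\<Sum>i\<in>idx L M. P i)"
  have fglue: "f (glue k y x) = (\<Sum>i\<in>idx L M. P i * (\<Prod>m\<in>{1..k}. fs (i m) (y m)))" for y
  proof -
    have U: "{1..M} = {1..k} \<union> {k+1..M}" using k by auto
    have "(\<Prod>m\<in>{1..M}. fs (i m) (glue k y x m)) = (\<Prod>m\<in>{1..k}. fs (i m) (y m)) * (\<Prod>m\<in>{k+1..M}. fs (i m) (x m))" for i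
    proof -
      have "(\<Prod>m\<in>{1..M}. fs (i m) (glue k y x m)) = (\<Prod>m\<in>{1..k}. fs (i m) (glue k y x m)) * (\<Prod>m\<in>{k+1..M}. fs (i m) (glue k y x m))"
        unfolding U by (rule prod.union_disjoint) auto
      also have "(\<Prod>m\<in>{1..k}. fs (i m) (glue k y x m)) = (\<Prod>m\<in>{1..k}. fs (i m) (y m))"
        by (rule prod.cong) (auto simp: glue_def)
      also have "(\<Prod>m\<in>{k+1..M}. fs (i m) (glue k y x m)) = (\<Prod>m\<in>{k+1..M}. fs (i m) (x m))"
        by (rule prod.cong) (auto simp: glue_def)
      finally show ?thesis .
    qed
    then show ?thesis unfolding f_def mix_def P_def by (simp add: mult_ac)
  qed
  have hint: "set_integrable (PiM {1..k} (\<lambda>_. lborel)) (orthant k) (\<lambda>y. \<Prod>m\<in>{1..k}. fs (i m) (y m)) \<and>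
      (LINT y:orthant k|PiM {1..k} (\<lambda>_. lborel). (\<Prod>m\<in>{1..k}. fs (i m) (y m))) = 1"
    if i: "i \<in> idx L M" for i
  proof -
    have im: "i m \<in> {1..L}" if "m \<in> {1..k}" for m using idx_range[OF i] that k by auto
    have g: "set_integrable lborel {0..} (fs (i m))" if "m \<in> {1..k}" for m using F1[OF im[OF that]] by simp
    show ?thesis using prod_set_integral[of k "\<lambda>m. fs (i m)", OF g] F1[OF im] by simp
  qed
  have margD: "marg k f x = D"
  proof -
    have "marg k f x = (LINT y:orthant k|PiM {1..k} (\<lambda>_. lborel). (\<Sum>i\<in>idx L M. P i * (\<Prod>m\<in>{1..k}. fs (i m) (y m))))"
      unfolding marg_def fglue ..
    also have "\<dots> = (\<Sum>i\<in>idx L M. P i * (LINT y:orthant k|PiM {1..k} (\<lambda>_. lborel). (\<Prod>m\<in>{1..k}. fs (i m) (y m))))"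
      by (rule set_integral_sum_cmult(2)[OF fin]) (use hint in blast)
    also have "\<dots> = D" unfolding D_def using hint by simp
    finally show ?thesis .
  qed
  have Dpos: "D > 0" using defined margD by simp
  have qP: "q i = P i / D" for i
  proof (cases "k < M")
    case True
    then show ?thesis unfolding q_def P_def D_def by simp
  next
    case False
    then have kM: "k = M" using k by simp
    then have "P i = p i" for i unfolding P_def by simp
    moreover have "D = 1" unfolding D_def using dens \<open>\<And>i. P i = p i\<close> unfolding MMEam_weights_def by simp
    ultimately show ?thesis unfolding q_def using kM by simp
  qed
  have conj1: "fcon k f x y = (\<Sum>i\<in>idx L M. q i * (\<Prod>j\<in>{1..k}. fs (i j) (y j)))" for y
    unfolding fcon_def margD fglue qP by (simp add: sum_divide_distrib)
  have sumq: "(\<Sum>i\<in>idx L M. q i) = 1"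
    unfolding qP using Dpos by (simp add: sum_divide_distrib[symmetric] D_def)
  have fnn: "f (glue k y x) \<ge> 0" if y: "y \<in> orthant k" for y
  proof -
    define z where "z = restrict (glue k y x) {1..M}"
    have z: "z \<in> orthant M"
      unfolding z_def orthant_def using y xnn k by (auto simp: PiE_iff glue_def orthant_def)
    have "f z = f (glue k y x)" unfolding f_def mix_def z_def by (intro sum.cong prod.cong refl) auto
    then show ?thesis using dens z unfolding MMEam_weights_def f_def by auto
  qed
  have conj2: "is_MMEam L k fs (fcon k f x)"
  proof -
    define p' where "p' j = (\<Sum>i\<in>{i\<in>idx L M. restrict i {1..k} = j}. q i)" for j
    have restr: "restrict i {1..k} \<in> idx L k" if "i \<in> idx L M" for i
      using that k unfolding idx_def by (auto simp: PiE_iff)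
    have finK: "finite (idx L k)" unfolding idx_def by (simp add: finite_PiE)
    have grp: "(\<Sum>j\<in>idx L k. (\<Sum>i\<in>{i\<in>idx L M. restrict i {1..k} = j}. g i)) = (\<Sum>i\<in>idx L M. g i)" for g :: "(nat \<Rightarrow> nat) \<Rightarrow> real"
      by (rule sum.group[OF fin finK]) (use restr in blast)
    have mixp': "mix L k fs p' y = (\<Sum>i\<in>idx L M. q i * (\<Prod>m\<in>{1..k}. fs (i m) (y m)))" for y
    proof -
      have "mix L k fs p' y = (\<Sum>j\<in>idx L k. (\<Sum>i\<in>{i\<in>idx L M. restrict i {1..k} = j}. q i * (\<Prod>m\<in>{1..k}. fs (j m) (y m))))"
        unfolding mix_def p'_def by (simp add: sum_distrib_right)
      also have "\<dots> = (\<Sum>j\<in>idx L k. (\<Sum>i\<in>{i\<in>idx L M. restrict i {1..k} = j}. q i * (\<Prod>m\<in>{1..k}. fs (i m) (y m))))"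
        by (intro sum.cong refl) auto
      also have "\<dots> = (\<Sum>i\<in>idx L M. q i * (\<Prod>m\<in>{1..k}. fs (i m) (y m)))" by (rule grp)
      finally show ?thesis .
    qed
    have "MMEam_weights L k fs p'"
      unfolding MMEam_weights_def
    proof
      show "(\<Sum>j\<in>idx L k. p' j) = 1" unfolding p'_def grp by (rule sumq)
      show "\<forall>y\<in>orthant k. 0 \<le> mix L k fs p' y"
      proof
        fix y assume y: "y \<in> orthant k"
        have "mix L k fs p' y = fcon k f x y" unfolding mixp' conj1 ..
        also have "\<dots> \<ge> 0" unfolding fcon_def margD using fnn[OF y] Dpos by simp
        finally show "0 \<le> mix L k fs p' y" .
      qed
    qed
    moreover have "\<forall>y\<in>orthant k. fcon k f x y = mix L k fs p' y" unfolding mixp' conj1 by simp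
    ultimately show ?thesis unfolding is_MMEam_def by blast
  qed
  have conj3: "set_integrable (PiM {1..k} (\<lambda>_. lborel)) (orthant k)
              (\<lambda>y. (\<Prod>j\<in>{1..k}. y j ^ r j) * fcon k f x y)
          \<and> (LINT y:orthant k|PiM {1..k} (\<lambda>_. lborel).
                (\<Prod>j\<in>{1..k}. y j ^ r j) * fcon k f x y)
            = (\<Sum>i\<in>idx L M. q i * (\<Prod>j\<in>{1..k}.
                 fact (r j) * (\<alpha> (i j) \<bullet> ((the (mat_inverse (- T (i j))) ^\<^sub>m (r j + 1)) *\<^sub>v t (i j)))))"
    for r :: "nat \<Rightarrow> nat"
  proof -
    have eq: "(\<lambda>y. (\<Prod>j\<in>{1..k}. y j ^ r j) * fcon k f x y) =
              (\<lambda>y. \<Sum>i\<in>idx L M. q i * (\<Prod>m\<in>{1..k}. y m ^ r m * fs (i m) (y m)))"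
      unfolding conj1 by (auto simp: sum_distrib_left prod.distrib mult_ac)
    have hint2: "set_integrable (PiM {1..k} (\<lambda>_. lborel)) (orthant k) (\<lambda>y. \<Prod>m\<in>{1..k}. y m ^ r m * fs (i m) (y m)) \<and>
      (LINT y:orthant k|PiM {1..k} (\<lambda>_. lborel). (\<Prod>m\<in>{1..k}. y m ^ r m * fs (i m) (y m))) =
       (\<Prod>j\<in>{1..k}. fact (r j) * (\<alpha> (i j) \<bullet> ((the (mat_inverse (- T (i j))) ^\<^sub>m (r j + 1)) *\<^sub>v t (i j))))"
      if i: "i \<in> idx L M" for i
    proof -
      have im: "i m \<in> {1..L}" if "m \<in> {1..k}" for m using idx_range[OF i] that k by auto
      have g: "set_integrable lborel {0..} (\<lambda>z. z ^ r m * fs (i m) z)" if "m \<in> {1..k}" for m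
        using F2[OF im[OF that]] by simp
      show ?thesis using prod_set_integral[of k "\<lambda>m z. z ^ r m * fs (i m) z", OF g] F2[OF im] by simp
    qed
    show ?thesis unfolding eq
      using set_integral_sum_cmult[OF fin, where h="\<lambda>i y. \<Prod>m\<in>{1..k}. y m ^ r m * fs (i m) (y m)"
          and M="PiM {1..k} (\<lambda>_. lborel)" and A="orthant k" and c=q] hint2 by simp
  qed
  show ?thesis using conj1 conj2 conj3 by blast
qed

end
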